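(* Let $f:M\to\mathbb{R}^3$ be an immersion with eq\"uiaffine transversal vector field $\xi$ and positive definite induced bilinear form $h$, let $(u,v)$ be isothermal coordinates centered at an umbilical point $(0,0)$ with $\lambda_0=b_{11}(0,0)=b_{22}(0,0)\neq0$, and set $q_0=f(0,0)+\lambda_0^{-1}\xi(0,0)$. Let $k\ge1$. Then $(0,0)$ is umbilical of order $\ge k$ (i.e. the $(k-1)$-jet at $(0,0)$ of $\mathcal{B}=(b_{11}-b_{22},2b_{12})$ vanishes) if and only if $$f(u,v)+\lambda_0^{-1}\xi(u,v)=q_0+O(k+1),$$ where $O(k+1)$ denotes terms of degree at least $k+1$ in $(u,v)$.
   Context: $D$ is the flat connection of $\mathbb{R}^3$; $h$ and the shape operator $B$ are defined by $D_Xf_*Y=f_*(\nabla_XY)+h(X,Y)\xi$, $D_X\xi=-f_*(BX)+\tau(X)\xi$, eq\"uiaffine meaning $\tau=0$. Isothermal coordinates: $h(\partial_u,\partial_u)=h(\partial_v,\partial_v)=\rho$, $h(\partial_u,\partial_v)=0$. The matrix of $B$ is given by $\xi_u=-b_{11}f_u-b_{21}f_v$, $\xi_v=-b_{12}f_u-b_{22}f_v$ (with $b_{12}=b_{21}$). Umbilical: $B$ a multiple of the identity. *)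

theory Defs
  imports "HOL-Analysis.Analysis" "HOL-Analysis.Cross3"
begin

definition pu :: "(real \<times> real \<Rightarrow> 'a::real_normed_vector) \<Rightarrow> real \<times> real \<Rightarrow> 'a" where
  "pu g = (\<lambda>(u,v). vector_derivative (\<lambda>t. g (t, v)) (at u))"

definition pv :: "(real \<times> real \<Rightarrow> 'a::real_normed_vector) \<Rightarrow> real \<times> real \<Rightarrow> 'a" where
  "pv g = (\<lambda>(u,v). vector_derivative (\<lambda>t. g (u, t)) (at v))"

definition pd :: "nat \<Rightarrow> nat \<Rightarrow> (real \<times> real \<Rightarrow> 'a::real_normed_vector) \<Rightarrow> real \<times> real \<Rightarrow> 'a" where
  "pd i j g = (pu ^^ i) ((pv ^^ j) g)"

definition smooth_on2 :: "(real \<times> real) set \<Rightarrow> (real \<times> real \<Rightarrow> 'a::real_normed_vector) \<Rightarrow> bool" where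
  "smooth_on2 U g \<longleftrightarrow> (\<forall>i j. \<forall>p\<in>U. pd i j g differentiable (at p))"

definition jet_vanishes :: "nat \<Rightarrow> (real \<times> real \<Rightarrow> 'a::real_normed_vector) \<Rightarrow> real \<times> real \<Rightarrow> bool" where
  "jet_vanishes m g p0 \<longleftrightarrow> (\<forall>i j. i + j \<le> m \<longrightarrow> pd i j g p0 = 0)"

end

theory Submission imports Defs begin

lemma pu_via: "((\<lambda>t. g (t,v)) has_vector_derivative d) (at u) \<Longrightarrow> pu g (u,v) = d"
  by (simp add: pu_def vector_derivative_at)

lemma pv_via: "((\<lambda>t. g (u,t)) has_vector_derivative d) (at v) \<Longrightarrow> pv g (u,v) = d"
  by (simp add: pv_def vector_derivative_at)

lemma pu_hvd:
  assumes "g differentiable at (u,v)"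
  shows "((\<lambda>t. g (t,v)) has_vector_derivative pu g (u,v)) (at u)"
proof -
  obtain D where D: "(g has_derivative D) (at (u,v))" using assms unfolding differentiable_def by blast
  have "((\<lambda>t. (t,v)) has_derivative (\<lambda>t. (t,0))) (at u)"
    by (auto intro!: derivative_eq_intros)
  from has_derivative_compose[OF this D] have "((\<lambda>t. g (t,v)) has_derivative (\<lambda>t. D (t,0))) (at u)" by simp
  moreover have "(\<lambda>t. D (t,0)) = (\<lambda>t. t *\<^sub>R D (1,0))"
  proof
    fix t :: real
    have "D (t *\<^sub>R (1,0)) = t *\<^sub>R D (1,0)"
      by (rule linear_scale[OF bounded_linear.linear[OF has_derivative_bounded_linear[OF D]]])
    then show "D (t,0) = t *\<^sub>R D (1,0)" by simp
  qed
  ultimately have h: "((\<lambda>t. g (t,v)) has_vector_derivative D (1,0)) (at u)"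
    by (simp add: has_vector_derivative_def)
  then show ?thesis using pu_via[OF h] by simp
qed

lemma pv_hvd:
  assumes "g differentiable at (u,v)"
  shows "((\<lambda>t. g (u,t)) has_vector_derivative pv g (u,v)) (at v)"
proof -
  obtain D where D: "(g has_derivative D) (at (u,v))" using assms unfolding differentiable_def by blast
  have "((\<lambda>t. (u,t)) has_derivative (\<lambda>t. (0,t))) (at v)"
    by (auto intro!: derivative_eq_intros)
  from has_derivative_compose[OF this D] have "((\<lambda>t. g (u,t)) has_derivative (\<lambda>t. D (0,t))) (at v)" by simp
  moreover have "(\<lambda>t. D (0,t)) = (\<lambda>t. t *\<^sub>R D (0,1))"
  proof
    fix t :: real
    have "D (t *\<^sub>R (0,1)) = t *\<^sub>R D (0,1)"
      by (rule linear_scale[OF bounded_linear.linear[OF has_derivative_bounded_linear[OF D]]])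
    then show "D (0,t) = t *\<^sub>R D (0,1)" by simp
  qed
  ultimately have h: "((\<lambda>t. g (u,t)) has_vector_derivative D (0,1)) (at v)"
    by (simp add: has_vector_derivative_def)
  then show ?thesis using pv_via[OF h] by simp
qed

lemma open_ball_pair:
  assumes "open U" "(u,v) \<in> U"
  obtains e where "e > 0" "\<And>a b. dist a u < e \<Longrightarrow> dist b v < e \<Longrightarrow> (a,b) \<in> U"
proof -
  obtain e where e: "e > 0" "ball (u,v) e \<subseteq> U" using assms open_contains_ball by blast
  show ?thesis
  proof (rule that[of "e/2"])
    fix a b assume "dist a u < e/2" "dist b v < e/2"
    moreover have "dist (a,b) (u,v) \<le> dist a u + dist b v"
      using dist_Pair_Pair[of a b u v] sqrt_sum_squares_le_sum_abs[of "dist a u" "dist b v"] by simp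
    ultimately have "dist (a,b) (u,v) < e" by simp
    then show "(a,b) \<in> U" using e by (auto simp: dist_commute)
  qed (use e in auto)
qed

lemma pu_local:
  assumes "open U" "(u,v) \<in> U" "\<And>q. q \<in> U \<Longrightarrow> g q = h q"
  shows "pu g (u,v) = pu h (u,v)"
proof -
  obtain e where e: "e > 0" "\<And>a b. dist a u < e \<Longrightarrow> dist b v < e \<Longrightarrow> (a,b) \<in> U"
    using open_ball_pair[OF assms(1,2)] by blast
  have ev: "eventually (\<lambda>t. t \<in> UNIV \<longrightarrow> g (t,v) = h (t,v)) (nhds u)"
    unfolding eventually_nhds_metric using e assms(3) by auto
  have e2: "(\<lambda>d. ((\<lambda>t. g (t,v)) has_vector_derivative d) (at u)) = (\<lambda>d. ((\<lambda>t. h (t,v)) has_vector_derivative d) (at u))"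
    using has_vector_derivative_cong_ev[OF ev] assms by (intro ext) auto
  show ?thesis unfolding pu_def vector_derivative_def by (simp only: prod.case e2)
qed

lemma pv_local:
  assumes "open U" "(u,v) \<in> U" "\<And>q. q \<in> U \<Longrightarrow> g q = h q"
  shows "pv g (u,v) = pv h (u,v)"
proof -
  obtain e where e: "e > 0" "\<And>a b. dist a u < e \<Longrightarrow> dist b v < e \<Longrightarrow> (a,b) \<in> U"
    using open_ball_pair[OF assms(1,2)] by blast
  have ev: "eventually (\<lambda>t. t \<in> UNIV \<longrightarrow> g (u,t) = h (u,t)) (nhds v)"
    unfolding eventually_nhds_metric using e assms(3) by auto
  have e2: "(\<lambda>d. ((\<lambda>t. g (u,t)) has_vector_derivative d) (at v)) = (\<lambda>d. ((\<lambda>t. h (u,t)) has_vector_derivative d) (at v))"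
    using has_vector_derivative_cong_ev[OF ev] assms by (intro ext) auto
  show ?thesis unfolding pv_def vector_derivative_def by (simp only: prod.case e2)
qed

lemma pu_localU: "open U \<Longrightarrow> (\<And>q. q \<in> U \<Longrightarrow> g q = h q) \<Longrightarrow> p \<in> U \<Longrightarrow> pu g p = pu h p"
  by (cases p) (metis pu_local)
lemma pv_localU: "open U \<Longrightarrow> (\<And>q. q \<in> U \<Longrightarrow> g q = h q) \<Longrightarrow> p \<in> U \<Longrightarrow> pv g p = pv h p"
  by (cases p) (metis pv_local)

lemma diff_bilin:
  fixes p :: "real \<times> real" and bl :: "'a::real_normed_vector \<Rightarrow> 'b::real_normed_vector \<Rightarrow> 'c::real_normed_vector"
  assumes "bounded_bilinear bl" "x differentiable at p" "y differentiable at p"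
  shows "(\<lambda>q. bl (x q) (y q)) differentiable at p"
  using assms bounded_bilinear.FDERIV[OF assms(1)] unfolding differentiable_def by blast

lemma diff_lin:
  fixes p :: "real \<times> real" and L :: "'a::real_normed_vector \<Rightarrow> 'b::real_normed_vector"
  assumes "bounded_linear L" "x differentiable at p"
  shows "(\<lambda>q. L (x q)) differentiable at p"
  using assms bounded_linear.has_derivative[OF assms(1)] unfolding differentiable_def by blast

lemma diff_inv:
  assumes "(d :: real \<times> real \<Rightarrow> real) differentiable at p" "d p \<noteq> 0"
  shows "(\<lambda>q. inverse (d q)) differentiable at p"
  using assms by (rule differentiable_inverse)

lemma pu_add: "g differentiable at p \<Longrightarrow> h differentiable at p \<Longrightarrow> pu (\<lambda>q. g q + h q) p = pu g p + pu h p"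
  by (cases p) (simp, rule pu_via, rule has_vector_derivative_add; rule pu_hvd, simp)
lemma pv_add: "g differentiable at p \<Longrightarrow> h differentiable at p \<Longrightarrow> pv (\<lambda>q. g q + h q) p = pv g p + pv h p"
  by (cases p) (simp, rule pv_via, rule has_vector_derivative_add; rule pv_hvd, simp)

lemma pu_lin: "bounded_linear L \<Longrightarrow> g differentiable at p \<Longrightarrow> pu (\<lambda>q. L (g q)) p = L (pu g p)"
  by (cases p) (simp, rule pu_via, rule bounded_linear.has_vector_derivative, assumption, rule pu_hvd, simp)
lemma pv_lin: "bounded_linear L \<Longrightarrow> g differentiable at p \<Longrightarrow> pv (\<lambda>q. L (g q)) p = L (pv g p)"
  by (cases p) (simp, rule pv_via, rule bounded_linear.has_vector_derivative, assumption, rule pv_hvd, simp)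

lemma pu_bilin: "bounded_bilinear bl \<Longrightarrow> x differentiable at p \<Longrightarrow> y differentiable at p \<Longrightarrow>
   pu (\<lambda>q. bl (x q) (y q)) p = bl (x p) (pu y p) + bl (pu x p) (y p)"
  by (cases p) (simp, rule pu_via, rule bounded_bilinear.has_vector_derivative, assumption; rule pu_hvd, simp)
lemma pv_bilin: "bounded_bilinear bl \<Longrightarrow> x differentiable at p \<Longrightarrow> y differentiable at p \<Longrightarrow>
   pv (\<lambda>q. bl (x q) (y q)) p = bl (x p) (pv y p) + bl (pv x p) (y p)"
  by (cases p) (simp, rule pv_via, rule bounded_bilinear.has_vector_derivative, assumption; rule pv_hvd, simp)

lemma pu_const: "pu (\<lambda>q. c) p = 0"
  by (cases p) (simp, rule pu_via, rule has_vector_derivative_const)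
lemma pv_const: "pv (\<lambda>q. c) p = 0"
  by (cases p) (simp, rule pv_via, rule has_vector_derivative_const)

lemma pu_inv:
  assumes "(d :: real \<times> real \<Rightarrow> real) differentiable at p" "d p \<noteq> 0"
  shows "pu (\<lambda>q. inverse (d q)) p = - (pu d p * (inverse (d p) * inverse (d p)))"
proof (cases p)
  case (Pair u v)
  have "((\<lambda>t. d (t,v)) has_real_derivative pu d (u,v)) (at u)"
    using pu_hvd[of d u v] assms Pair by (simp add: has_real_derivative_iff_has_vector_derivative)
  from DERIV_inverse_fun[OF this] have "((\<lambda>t. inverse (d (t,v))) has_real_derivative - (pu d (u,v) * (inverse (d (u,v)) * inverse (d (u,v))))) (at u)"
    using assms Pair by simp
  then show ?thesis using Pair pu_via
    by (simp add: has_real_derivative_iff_has_vector_derivative power2_eq_square inverse_mult_distrib)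
qed
lemma pv_inv:
  assumes "(d :: real \<times> real \<Rightarrow> real) differentiable at p" "d p \<noteq> 0"
  shows "pv (\<lambda>q. inverse (d q)) p = - (pv d p * (inverse (d p) * inverse (d p)))"
proof (cases p)
  case (Pair u v)
  have "((\<lambda>t. d (u,t)) has_real_derivative pv d (u,v)) (at v)"
    using pv_hvd[of d u v] assms Pair by (simp add: has_real_derivative_iff_has_vector_derivative)
  from DERIV_inverse_fun[OF this] have "((\<lambda>t. inverse (d (u,t))) has_real_derivative - (pv d (u,v) * (inverse (d (u,v)) * inverse (d (u,v))))) (at v)"
    using assms Pair by simp
  then show ?thesis using Pair pv_via
    by (simp add: has_real_derivative_iff_has_vector_derivative power2_eq_square inverse_mult_distrib)
qed

lemma diff_localU: "open U \<Longrightarrow> (\<And>q. q \<in> U \<Longrightarrow> g q = h q) \<Longrightarrow> p \<in> U \<Longrightarrow> g differentiable at p \<Longrightarrow> h differentiable at p"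
  unfolding differentiable_def using has_derivative_transform_within_open by blast

fun smn :: "nat \<Rightarrow> (real \<times> real) set \<Rightarrow> (real \<times> real \<Rightarrow> 'a::real_normed_vector) \<Rightarrow> bool" where
  "smn 0 U g = (\<forall>p\<in>U. g differentiable at p)"
| "smn (Suc n) U g = ((\<forall>p\<in>U. g differentiable at p) \<and> smn n U (pu g) \<and> smn n U (pv g))"

definition Sm :: "(real \<times> real) set \<Rightarrow> (real \<times> real \<Rightarrow> 'a::real_normed_vector) \<Rightarrow> bool" where
  "Sm U g = (\<forall>n. smn n U g)"

lemma smn_diff: "smn n U g \<Longrightarrow> p \<in> U \<Longrightarrow> g differentiable at p"
  by (cases n) (simp, simp only: smn.simps(2))

lemma smn_SucI: "(\<And>p. p \<in> U \<Longrightarrow> g differentiable at p) \<Longrightarrow> smn n U (pu g) \<Longrightarrow> smn n U (pv g) \<Longrightarrow> smn (Suc n) U g"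
  by (simp only: smn.simps(2)) blast
lemma smn_Suc_pu: "smn (Suc n) U g \<Longrightarrow> smn n U (pu g)"
  by (simp only: smn.simps(2))
lemma smn_Suc_pv: "smn (Suc n) U g \<Longrightarrow> smn n U (pv g)"
  by (simp only: smn.simps(2))

declare smn.simps(2)[simp del]

lemma smn_mono: "smn (Suc n) U g \<Longrightarrow> smn n U g"
proof (induction n arbitrary: g)
  case 0
  then show ?case using smn_diff[of "Suc 0" U g] by simp
next
  case (Suc n)
  have h: "(\<forall>p\<in>U. g differentiable at p) \<and> smn (Suc n) U (pu g) \<and> smn (Suc n) U (pv g)"
    using Suc.prems unfolding smn.simps(2)[of "Suc n" U g] .
  then show ?case unfolding smn.simps(2)[of n U g] using Suc.IH by blast
qed

lemma smn_cong: "open U \<Longrightarrow> (\<And>q. q \<in> U \<Longrightarrow> g q = h q) \<Longrightarrow> smn n U g \<Longrightarrow> smn n U h"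
proof (induction n arbitrary: g h)
  case 0
  then show ?case using diff_localU[of U g h] by auto
next
  case (Suc n)
  have "smn n U (pu h)" using Suc.IH[of "pu g" "pu h"] Suc.prems pu_localU[of U g h] smn_Suc_pu by blast
  moreover have "smn n U (pv h)" using Suc.IH[of "pv g" "pv h"] Suc.prems pv_localU[of U g h] smn_Suc_pv by blast
  ultimately show ?case using Suc.prems diff_localU[of U g h] smn_diff by (intro smn_SucI) blast+
qed

lemma smn_add: "open U \<Longrightarrow> smn n U g \<Longrightarrow> smn n U h \<Longrightarrow> smn n U (\<lambda>q. g q + h q)"
proof (induction n arbitrary: g h)
  case 0
  then show ?case by (auto intro: differentiable_add)
next
  case (Suc n)
  have dg: "\<And>p. p \<in> U \<Longrightarrow> g differentiable at p" and dh: "\<And>p. p \<in> U \<Longrightarrow> h differentiable at p"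
    using Suc.prems smn_diff by blast+
  have "smn n U (\<lambda>q. pu g q + pu h q)"
    by (rule Suc.IH[OF Suc.prems(1) smn_Suc_pu[OF Suc.prems(2)] smn_Suc_pu[OF Suc.prems(3)]])
  then have 1: "smn n U (pu (\<lambda>q. g q + h q))"
    by (rule smn_cong[OF Suc.prems(1), rotated]) (simp add: pu_add dg dh)
  have "smn n U (\<lambda>q. pv g q + pv h q)"
    by (rule Suc.IH[OF Suc.prems(1) smn_Suc_pv[OF Suc.prems(2)] smn_Suc_pv[OF Suc.prems(3)]])
  then have 2: "smn n U (pv (\<lambda>q. g q + h q))"
    by (rule smn_cong[OF Suc.prems(1), rotated]) (simp add: pv_add dg dh)
  show ?case by (rule smn_SucI[OF _ 1 2]) (simp add: differentiable_add dg dh)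
qed

lemma smn_lin: "open U \<Longrightarrow> bounded_linear L \<Longrightarrow> smn n U g \<Longrightarrow> smn n U (\<lambda>q. L (g q))"
proof (induction n arbitrary: g)
  case 0
  then show ?case by (auto intro: diff_lin)
next
  case (Suc n)
  have dg: "\<And>p. p \<in> U \<Longrightarrow> g differentiable at p" using Suc.prems smn_diff by blast
  have "smn n U (\<lambda>q. L (pu g q))" by (rule Suc.IH[OF Suc.prems(1,2) smn_Suc_pu[OF Suc.prems(3)]])
  then have 1: "smn n U (pu (\<lambda>q. L (g q)))"
    by (rule smn_cong[OF Suc.prems(1), rotated]) (simp add: pu_lin dg Suc.prems)
  have "smn n U (\<lambda>q. L (pv g q))" by (rule Suc.IH[OF Suc.prems(1,2) smn_Suc_pv[OF Suc.prems(3)]])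
  then have 2: "smn n U (pv (\<lambda>q. L (g q)))"
    by (rule smn_cong[OF Suc.prems(1), rotated]) (simp add: pv_lin dg Suc.prems)
  show ?case by (rule smn_SucI[OF _ 1 2]) (simp add: diff_lin dg Suc.prems)
qed

lemma smn_bilin: "open U \<Longrightarrow> bounded_bilinear bl \<Longrightarrow> smn n U x \<Longrightarrow> smn n U y \<Longrightarrow> smn n U (\<lambda>q. bl (x q) (y q))"
proof (induction n arbitrary: x y)
  case 0
  then show ?case by (auto intro: diff_bilin)
next
  case (Suc n)
  have dx: "\<And>p. p \<in> U \<Longrightarrow> x differentiable at p" and dy: "\<And>p. p \<in> U \<Longrightarrow> y differentiable at p"
    using Suc.prems smn_diff by blast+
  have mx: "smn n U x" and my: "smn n U y" using Suc.prems smn_mono by blast+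
  have "smn n U (\<lambda>q. bl (x q) (pu y q) + bl (pu x q) (y q))"
    by (rule smn_add[OF Suc.prems(1) Suc.IH[OF Suc.prems(1,2) mx smn_Suc_pu[OF Suc.prems(4)]]
             Suc.IH[OF Suc.prems(1,2) smn_Suc_pu[OF Suc.prems(3)] my]])
  then have 1: "smn n U (pu (\<lambda>q. bl (x q) (y q)))"
    by (rule smn_cong[OF Suc.prems(1), rotated]) (simp add: pu_bilin dx dy Suc.prems)
  have "smn n U (\<lambda>q. bl (x q) (pv y q) + bl (pv x q) (y q))"
    by (rule smn_add[OF Suc.prems(1) Suc.IH[OF Suc.prems(1,2) mx smn_Suc_pv[OF Suc.prems(4)]]
             Suc.IH[OF Suc.prems(1,2) smn_Suc_pv[OF Suc.prems(3)] my]])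
  then have 2: "smn n U (pv (\<lambda>q. bl (x q) (y q)))"
    by (rule smn_cong[OF Suc.prems(1), rotated]) (simp add: pv_bilin dx dy Suc.prems)
  show ?case by (rule smn_SucI[OF _ 1 2]) (simp add: diff_bilin dx dy Suc.prems)
qed

lemma smn_const: "smn n U (\<lambda>q. c)"
proof (induction n arbitrary: c)
  case 0
  then show ?case by simp
next
  case (Suc n)
  have "pu (\<lambda>q. c) = (\<lambda>q. 0)" "pv (\<lambda>q. c) = (\<lambda>q. 0)" by (auto simp: pu_const pv_const)
  then show ?case using Suc.IH[of 0] by (intro smn_SucI) simp_all
qed

lemma smn_inv: "open U \<Longrightarrow> smn n U d \<Longrightarrow> (\<And>p. p \<in> U \<Longrightarrow> (d::real\<times>real\<Rightarrow>real) p \<noteq> 0) \<Longrightarrow> smn n U (\<lambda>q. inverse (d q))"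
proof (induction n arbitrary: d)
  case 0
  then show ?case by (auto intro: diff_inv)
next
  case (Suc n)
  have dd: "\<And>p. p \<in> U \<Longrightarrow> d differentiable at p" using Suc.prems smn_diff by blast
  have iv: "smn n U (\<lambda>q. inverse (d q))" by (rule Suc.IH[OF Suc.prems(1) smn_mono[OF Suc.prems(2)] Suc.prems(3)])
  have ii: "smn n U (\<lambda>q. inverse (d q) * inverse (d q))"
    by (rule smn_bilin[OF Suc.prems(1) bounded_bilinear_mult iv iv])
  have "smn n U (\<lambda>q. - (pu d q * (inverse (d q) * inverse (d q))))"
    by (rule smn_lin[OF Suc.prems(1) bounded_linear_minus[OF bounded_linear_ident]
          smn_bilin[OF Suc.prems(1) bounded_bilinear_mult smn_Suc_pu[OF Suc.prems(2)] ii]])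
  then have 1: "smn n U (pu (\<lambda>q. inverse (d q)))"
    by (rule smn_cong[OF Suc.prems(1), rotated]) (simp add: pu_inv dd Suc.prems)
  have "smn n U (\<lambda>q. - (pv d q * (inverse (d q) * inverse (d q))))"
    by (rule smn_lin[OF Suc.prems(1) bounded_linear_minus[OF bounded_linear_ident]
          smn_bilin[OF Suc.prems(1) bounded_bilinear_mult smn_Suc_pv[OF Suc.prems(2)] ii]])
  then have 2: "smn n U (pv (\<lambda>q. inverse (d q)))"
    by (rule smn_cong[OF Suc.prems(1), rotated]) (simp add: pv_inv dd Suc.prems)
  show ?case by (rule smn_SucI[OF _ 1 2]) (simp add: diff_inv dd Suc.prems)
qed


lemma pu_D:
  assumes D: "(g has_derivative D) (at (u,v))"
  shows "pu g (u,v) = D (1,0)"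
proof -
  have "((\<lambda>t. (t,v)) has_derivative (\<lambda>t. (t,0))) (at u)"
    by (auto intro!: derivative_eq_intros)
  from has_derivative_compose[OF this D] have "((\<lambda>t. g (t,v)) has_derivative (\<lambda>t. D (t,0))) (at u)" by simp
  moreover have "(\<lambda>t. D (t,0)) = (\<lambda>t. t *\<^sub>R D (1,0))"
  proof
    fix t :: real
    have "D (t *\<^sub>R (1,0)) = t *\<^sub>R D (1,0)"
      by (rule linear_scale[OF bounded_linear.linear[OF has_derivative_bounded_linear[OF D]]])
    then show "D (t,0) = t *\<^sub>R D (1,0)" by simp
  qed
  ultimately have h: "((\<lambda>t. g (t,v)) has_vector_derivative D (1,0)) (at u)"
    by (simp add: has_vector_derivative_def)
  then show ?thesis using pu_via[OF h] by simp
qed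

lemma pv_D:
  assumes D: "(g has_derivative D) (at (u,v))"
  shows "pv g (u,v) = D (0,1)"
proof -
  have "((\<lambda>t. (u,t)) has_derivative (\<lambda>t. (0,t))) (at v)"
    by (auto intro!: derivative_eq_intros)
  from has_derivative_compose[OF this D] have "((\<lambda>t. g (u,t)) has_derivative (\<lambda>t. D (0,t))) (at v)" by simp
  moreover have "(\<lambda>t. D (0,t)) = (\<lambda>t. t *\<^sub>R D (0,1))"
  proof
    fix t :: real
    have "D (t *\<^sub>R (0,1)) = t *\<^sub>R D (0,1)"
      by (rule linear_scale[OF bounded_linear.linear[OF has_derivative_bounded_linear[OF D]]])
    then show "D (0,t) = t *\<^sub>R D (0,1)" by simp
  qed
  ultimately have h: "((\<lambda>t. g (u,t)) has_vector_derivative D (0,1)) (at v)"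
    by (simp add: has_vector_derivative_def)
  then show ?thesis using pv_via[OF h] by simp
qed

lemma lin_pair_split:
  assumes "bounded_linear D"
  shows "D (x, y) = x *\<^sub>R D (1,0) + y *\<^sub>R D (0,1)"
proof -
  have l: "linear D" using bounded_linear.linear[OF assms] .
  have "(x,y) = x *\<^sub>R (1,0) + y *\<^sub>R (0,(1::real))" by simp
  then have "D (x,y) = D (x *\<^sub>R (1,0) + y *\<^sub>R (0,1))" by metis
  also have "\<dots> = D (x *\<^sub>R (1,0)) + D (y *\<^sub>R (0,1))" by (rule linear_add[OF l])
  also have "\<dots> = x *\<^sub>R D (1,0) + y *\<^sub>R D (0,1)" by (simp only: linear_scale[OF l])
  finally show ?thesis .
qed

lemma schwarz_real:
  fixes h :: "real \<times> real \<Rightarrow> real"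
  assumes U: "open U" "(u,v) \<in> U" and dh: "\<And>q. q \<in> U \<Longrightarrow> h differentiable at q"
    and dG: "pu h differentiable at (u,v)" and dH: "pv h differentiable at (u,v)"
  shows "pv (pu h) (u,v) = pu (pv h) (u,v)"
proof -
  define G where "G = pu h"
  define H where "H = pv h"
  obtain DG where DG: "(G has_derivative DG) (at (u,v))" using dG unfolding G_def differentiable_def by blast
  obtain DH where DH: "(H has_derivative DH) (at (u,v))" using dH unfolding H_def differentiable_def by blast
  have lG: "bounded_linear DG" and lH: "bounded_linear DH" using DG DH has_derivative_bounded_linear by blast+
  define a where "a = DG (0,1)"
  define b where "b = DH (1,0)"
  have a: "pv (pu h) (u,v) = a" using pv_D[OF DG] unfolding a_def G_def .
  have b: "pu (pv h) (u,v) = b" using pu_D[OF DH] unfolding b_def H_def .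
  obtain r where r: "r > 0" "\<And>x y. dist x u < r \<Longrightarrow> dist y v < r \<Longrightarrow> (x,y) \<in> U"
    using open_ball_pair[OF U] by blast
  have main: "\<bar>a - b\<bar> \<le> 6 * e" if e: "e > 0" for e
  proof -
    obtain d1 where d1: "d1 > 0" "\<And>y. norm (y - (u,v)) < d1 \<Longrightarrow> norm (G y - G (u,v) - DG (y - (u,v))) \<le> e * norm (y - (u,v))"
      using DG e unfolding has_derivative_at_alt by blast
    obtain d2 where d2: "d2 > 0" "\<And>y. norm (y - (u,v)) < d2 \<Longrightarrow> norm (H y - H (u,v) - DH (y - (u,v))) \<le> e * norm (y - (u,v))"
      using DH e unfolding has_derivative_at_alt by blast
    define t where "t = min r (min d1 d2) / 4"
    have t: "t > 0" "t < r" "2 * t < d1" "2 * t < d2" using r d1 d2 unfolding t_def by auto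
    have inU: "(x,y) \<in> U" if "\<bar>x - u\<bar> \<le> t" "\<bar>y - v\<bar> \<le> t" for x y
      using r(2)[of x y] that t by (simp add: dist_real_def)
    have nrm: "norm ((x,y) - (u,v)) \<le> \<bar>x - u\<bar> + \<bar>y - v\<bar>" for x y
      using norm_Pair_le[of "x - u" "y - v"] by simp
    define \<Delta> where "\<Delta> = h (u+t,v+t) - h (u+t,v) - h (u,v+t) + h (u,v)"
    have "\<exists>z. u < z \<and> z < u + t \<and> (h (u+t,v+t) - h (u+t,v)) - (h (u,v+t) - h (u,v)) = ((u + t) - u) * (G (z,v+t) - G (z,v))"
    proof (rule MVT2[where f="\<lambda>s. h (s,v+t) - h (s,v)"])
      show "u < u + t" using t by simp
      fix x assume x: "u \<le> x" "x \<le> u + t"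
      have "((\<lambda>s. h (s,v+t)) has_vector_derivative G (x,v+t)) (at x)"
        unfolding G_def by (rule pu_hvd, rule dh, rule inU) (use x t in auto)
      moreover have "((\<lambda>s. h (s,v)) has_vector_derivative G (x,v)) (at x)"
        unfolding G_def by (rule pu_hvd, rule dh, rule inU) (use x t in auto)
      ultimately show "((\<lambda>s. h (s,v+t) - h (s,v)) has_real_derivative G (x,v+t) - G (x,v)) (at x)"
        by (simp add: has_real_derivative_iff_has_vector_derivative has_vector_derivative_diff)
    qed
    then obtain z where z: "u < z" "z < u + t" "\<Delta> = t * (G (z,v+t) - G (z,v))"
      unfolding \<Delta>_def by (auto simp: algebra_simps)
    have e1: "\<bar>G (z,v+t) - G (u,v) - DG (z - u, t)\<bar> \<le> e * (2*t)"
    proof -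
      have n: "norm ((z,v+t) - (u,v)) \<le> 2 * t" using nrm[of z "v+t"] z t by simp
      then have "norm (G (z,v+t) - G (u,v) - DG ((z,v+t) - (u,v))) \<le> e * norm ((z,v+t) - (u,v))"
        using t by (intro d1(2)) simp
      also have "\<dots> \<le> e * (2*t)" using n e by (intro mult_left_mono) auto
      finally show ?thesis by simp
    qed
    have e2: "\<bar>G (z,v) - G (u,v) - DG (z - u, 0)\<bar> \<le> e * t"
    proof -
      have n: "norm ((z,v) - (u,v)) \<le> t" using nrm[of z v] z t by simp
      then have "norm (G (z,v) - G (u,v) - DG ((z,v) - (u,v))) \<le> e * norm ((z,v) - (u,v))"
        using t by (intro d1(2)) simp
      also have "\<dots> \<le> e * t" using n e by (intro mult_left_mono) auto
      finally show ?thesis by simp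
    qed
    have "DG (z - u, t) - DG (z - u, 0) = t * a"
      unfolding a_def using lin_pair_split[OF lG, of "z-u" t] lin_pair_split[OF lG, of "z-u" 0] by simp
    then have "\<bar>(G (z,v+t) - G (z,v)) - t * a\<bar> \<le> 3 * e * t" using e1 e2 by linarith
    then have "\<bar>t * (G (z,v+t) - G (z,v)) - t * (t * a)\<bar> \<le> t * (3 * e * t)"
      using t by (metis abs_mult abs_of_pos mult_left_mono right_diff_distrib less_imp_le)
    then have A: "\<bar>\<Delta> - t * t * a\<bar> \<le> 3 * e * t * t" using z by (simp add: algebra_simps)
    have "\<exists>z. v < z \<and> z < v + t \<and> (h (u+t,v+t) - h (u,v+t)) - (h (u+t,v) - h (u,v)) = ((v + t) - v) * (H (u+t,z) - H (u,z))"
    proof (rule MVT2[where f="\<lambda>s. h (u+t,s) - h (u,s)"])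
      show "v < v + t" using t by simp
      fix x assume x: "v \<le> x" "x \<le> v + t"
      have "((\<lambda>s. h (u+t,s)) has_vector_derivative H (u+t,x)) (at x)"
        unfolding H_def by (rule pv_hvd, rule dh, rule inU) (use x t in auto)
      moreover have "((\<lambda>s. h (u,s)) has_vector_derivative H (u,x)) (at x)"
        unfolding H_def by (rule pv_hvd, rule dh, rule inU) (use x t in auto)
      ultimately show "((\<lambda>s. h (u+t,s) - h (u,s)) has_real_derivative H (u+t,x) - H (u,x)) (at x)"
        by (simp add: has_real_derivative_iff_has_vector_derivative has_vector_derivative_diff)
    qed
    then obtain w where w: "v < w" "w < v + t" "\<Delta> = t * (H (u+t,w) - H (u,w))"
      unfolding \<Delta>_def by (auto simp: algebra_simps)
    have f1: "\<bar>H (u+t,w) - H (u,v) - DH (t, w - v)\<bar> \<le> e * (2*t)"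
    proof -
      have n: "norm ((u+t,w) - (u,v)) \<le> 2 * t" using nrm[of "u+t" w] w t by simp
      then have "norm (H (u+t,w) - H (u,v) - DH ((u+t,w) - (u,v))) \<le> e * norm ((u+t,w) - (u,v))"
        using t by (intro d2(2)) simp
      also have "\<dots> \<le> e * (2*t)" using n e by (intro mult_left_mono) auto
      finally show ?thesis by simp
    qed
    have f2: "\<bar>H (u,w) - H (u,v) - DH (0, w - v)\<bar> \<le> e * t"
    proof -
      have n: "norm ((u,w) - (u,v)) \<le> t" using nrm[of u w] w t by simp
      then have "norm (H (u,w) - H (u,v) - DH ((u,w) - (u,v))) \<le> e * norm ((u,w) - (u,v))"
        using t by (intro d2(2)) simp
      also have "\<dots> \<le> e * t" using n e by (intro mult_left_mono) auto
      finally show ?thesis by simp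
    qed
    have "DH (t, w - v) - DH (0, w - v) = t * b"
      unfolding b_def using lin_pair_split[OF lH, of t "w-v"] lin_pair_split[OF lH, of 0 "w-v"] by simp
    then have "\<bar>(H (u+t,w) - H (u,w)) - t * b\<bar> \<le> 3 * e * t" using f1 f2 by linarith
    then have "\<bar>t * (H (u+t,w) - H (u,w)) - t * (t * b)\<bar> \<le> t * (3 * e * t)"
      using t by (metis abs_mult abs_of_pos mult_left_mono right_diff_distrib less_imp_le)
    then have B: "\<bar>\<Delta> - t * t * b\<bar> \<le> 3 * e * t * t" using w by (simp add: algebra_simps)
    have "t * t * \<bar>a - b\<bar> \<le> t * t * (6 * e)"
    proof -
      have "t * t * a - t * t * b = (t * t) * (a - b)" by (simp add: algebra_simps)
      then have "\<bar>t * t * a - t * t * b\<bar> = (t * t) * \<bar>a - b\<bar>" using t by (simp add: abs_mult)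
      then have "t * t * \<bar>a - b\<bar> = \<bar>t * t * a - t * t * b\<bar>" by simp
      also have "\<dots> \<le> \<bar>\<Delta> - t * t * a\<bar> + \<bar>\<Delta> - t * t * b\<bar>" by linarith
      also have "\<dots> \<le> t * t * (6 * e)" using A B by (simp add: algebra_simps)
      finally show ?thesis .
    qed
    then show ?thesis using t by (simp add: mult_le_cancel_left_pos)
  qed
  have "a = b"
  proof (rule ccontr)
    assume "a \<noteq> b"
    then have "\<bar>a - b\<bar> > 0" by simp
    then show False using main[of "\<bar>a - b\<bar> / 12"] by simp
  qed
  then show ?thesis using a b by simp
qed


lemma schwarz:
  fixes h :: "real \<times> real \<Rightarrow> 'a::euclidean_space"
  assumes U: "open U" "p \<in> U" and dh: "\<And>q. q \<in> U \<Longrightarrow> h differentiable at q"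
    and dG: "pu h differentiable at p" and dH: "pv h differentiable at p"
  shows "pv (pu h) p = pu (pv h) p"
proof (rule euclidean_eqI)
  fix b :: 'a assume "b \<in> Basis"
  define hb where "hb = (\<lambda>q. h q \<bullet> b)"
  have L: "bounded_linear (\<lambda>x::'a. x \<bullet> b)" by (rule bounded_linear_inner_left)
  have dhb: "\<And>q. q \<in> U \<Longrightarrow> hb differentiable at q" unfolding hb_def by (rule diff_lin[OF L dh])
  have pub: "\<And>q. q \<in> U \<Longrightarrow> (\<lambda>q. pu h q \<bullet> b) q = pu hb q"
    unfolding hb_def using pu_lin[OF L dh] by simp
  have pvb: "\<And>q. q \<in> U \<Longrightarrow> (\<lambda>q. pv h q \<bullet> b) q = pv hb q"
    unfolding hb_def using pv_lin[OF L dh] by simp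
  have dG': "pu hb differentiable at p" by (rule diff_localU[OF U(1) pub U(2) diff_lin[OF L dG]])
  have dH': "pv hb differentiable at p" by (rule diff_localU[OF U(1) pvb U(2) diff_lin[OF L dH]])
  have "pv (pu hb) p = pu (pv hb) p"
    using schwarz_real[of U "fst p" "snd p" hb] U dhb dG' dH' by simp
  moreover have "pv (pu hb) p = pv (\<lambda>q. pu h q \<bullet> b) p" using pv_localU[OF U(1) pub U(2)] by simp
  moreover have "\<dots> = pv (pu h) p \<bullet> b" by (rule pv_lin[OF L dG])
  moreover have "pu (pv hb) p = pu (\<lambda>q. pv h q \<bullet> b) p" using pu_localU[OF U(1) pvb U(2)] by simp
  moreover have "\<dots> = pu (pv h) p \<bullet> b" by (rule pu_lin[OF L dH])
  ultimately show "pv (pu h) p \<bullet> b = pu (pv h) p \<bullet> b" by simp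
qed

lemma pd00: "pd 0 0 g = g" and pd10: "pd 1 0 g = pu g" and pd01: "pd 0 1 g = pv g"
  by (simp_all add: pd_def)

lemma pd_pv: "pd i j (pv g) = pd i (Suc j) g"
  by (simp add: pd_def funpow_Suc_right del: funpow.simps)

lemma so_pv: "smooth_on2 U g \<Longrightarrow> smooth_on2 U (pv g)"
  unfolding smooth_on2_def pd_pv by blast

lemma so_diff: "smooth_on2 U g \<Longrightarrow> p \<in> U \<Longrightarrow> g differentiable at p"
  unfolding smooth_on2_def using pd00 by metis
lemma so_diff_pu: "smooth_on2 U g \<Longrightarrow> p \<in> U \<Longrightarrow> pu g differentiable at p"
  unfolding smooth_on2_def using pd10 by metis
lemma so_diff_pv: "smooth_on2 U g \<Longrightarrow> p \<in> U \<Longrightarrow> pv g differentiable at p"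
  unfolding smooth_on2_def using pd01 by metis

lemma so_pvj: "smooth_on2 U g \<Longrightarrow> smooth_on2 U ((pv ^^ j) g)"
  by (induction j) (simp_all add: so_pv)

lemma so_schwarz:
  fixes g :: "real \<times> real \<Rightarrow> 'a::euclidean_space"
  shows "open U \<Longrightarrow> smooth_on2 U g \<Longrightarrow> p \<in> U \<Longrightarrow> pv (pu g) p = pu (pv g) p"
  by (rule schwarz) (auto intro: so_diff so_diff_pu so_diff_pv)

lemma pui_local: "open U \<Longrightarrow> (\<And>q. q \<in> U \<Longrightarrow> F q = G q) \<Longrightarrow> p \<in> U \<Longrightarrow> (pu ^^ i) F p = (pu ^^ i) G p"
proof (induction i arbitrary: F G p)
  case 0
  then show ?case by simp
next
  case (Suc i)
  have "(pu ^^ i) (pu F) p = (pu ^^ i) (pu G) p"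
    by (rule Suc.IH[OF Suc.prems(1) pu_localU[OF Suc.prems(1,2)] Suc.prems(3)])
  then show ?case by (simp only: funpow_Suc_right o_apply)
qed

lemma comm_j:
  fixes g :: "real \<times> real \<Rightarrow> 'a::euclidean_space"
  assumes "open U" "smooth_on2 U g"
  shows "q \<in> U \<Longrightarrow> (pv ^^ j) (pu g) q = pu ((pv ^^ j) g) q"
proof (induction j arbitrary: q)
  case 0
  then show ?case by simp
next
  case (Suc j)
  have "(pv ^^ Suc j) (pu g) q = pv ((pv ^^ j) (pu g)) q" by simp
  also have "\<dots> = pv (pu ((pv ^^ j) g)) q" by (rule pv_localU[OF assms(1) Suc.IH Suc.prems])
  also have "\<dots> = pu (pv ((pv ^^ j) g)) q" by (rule so_schwarz[OF assms(1) so_pvj[OF assms(2)] Suc.prems])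
  also have "\<dots> = pu ((pv ^^ Suc j) g) q" by simp
  finally show ?case .
qed

lemma pd_pu:
  fixes g :: "real \<times> real \<Rightarrow> 'a::euclidean_space"
  assumes "open U" "smooth_on2 U g" "q \<in> U"
  shows "pd i j (pu g) q = pd (Suc i) j g q"
proof -
  have "pd (Suc i) j g = (pu ^^ i) (pu ((pv ^^ j) g))"
    by (simp add: pd_def funpow_Suc_right del: funpow.simps)
  moreover have "pd i j (pu g) q = (pu ^^ i) (pu ((pv ^^ j) g)) q"
    unfolding pd_def by (rule pui_local[OF assms(1) comm_j[OF assms(1,2)] assms(3)])
  ultimately show ?thesis by simp
qed

lemma so_pu:
  fixes g :: "real \<times> real \<Rightarrow> 'a::euclidean_space"
  assumes "open U" "smooth_on2 U g"
  shows "smooth_on2 U (pu g)"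
  unfolding smooth_on2_def
proof (intro allI ballI)
  fix i j p assume p: "p \<in> U"
  have "pd (Suc i) j g differentiable at p" using assms(2) p unfolding smooth_on2_def by blast
  then show "pd i j (pu g) differentiable at p"
    using diff_localU[OF assms(1) _ p, of "pd (Suc i) j g" "pd i j (pu g)"] pd_pu[OF assms] by metis
qed

lemma so_smn:
  fixes g :: "real \<times> real \<Rightarrow> 'a::euclidean_space"
  assumes "open U"
  shows "smooth_on2 U g \<Longrightarrow> smn n U g"
proof (induction n arbitrary: g)
  case 0
  then show ?case using so_diff by auto
next
  case (Suc n)
  show ?case by (rule smn_SucI[OF _ Suc.IH[OF so_pu[OF assms Suc.prems]] Suc.IH[OF so_pv[OF Suc.prems]]])
      (rule so_diff[OF Suc.prems])
qed

lemma so_Sm: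
  fixes g :: "real \<times> real \<Rightarrow> 'a::euclidean_space"
  shows "open U \<Longrightarrow> smooth_on2 U g \<Longrightarrow> Sm U g"
  unfolding Sm_def using so_smn by blast

lemma smn_pvj: "smn (j + n) U g \<Longrightarrow> smn n U ((pv ^^ j) g)"
proof (induction j arbitrary: g)
  case 0
  then show ?case by simp
next
  case (Suc j)
  have "smn (j + n) U (pv g)" using Suc.prems smn_Suc_pv by simp
  from Suc.IH[OF this] show ?case by (simp add: funpow_Suc_right del: funpow.simps)
qed

lemma smn_pui: "smn (i + n) U g \<Longrightarrow> smn n U ((pu ^^ i) g)"
proof (induction i arbitrary: g)
  case 0
  then show ?case by simp
next
  case (Suc i)
  have "smn (i + n) U (pu g)" using Suc.prems smn_Suc_pu by simp
  from Suc.IH[OF this] show ?case by (simp add: funpow_Suc_right del: funpow.simps)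
qed

lemma Sm_so: "Sm U g \<Longrightarrow> smooth_on2 U g"
  unfolding smooth_on2_def Sm_def pd_def
proof (intro allI ballI)
  fix i j p assume "\<forall>n. smn n U g" "p \<in> U"
  then have "smn (j + (i + 0)) U g" by blast
  then have "smn (i + 0) U ((pv ^^ j) g)" by (rule smn_pvj)
  then have "smn 0 U ((pu ^^ i) ((pv ^^ j) g))" by (rule smn_pui)
  then show "(pu ^^ i) ((pv ^^ j) g) differentiable at p" using \<open>p \<in> U\<close> by simp
qed


lemma Sm_pu: "Sm U g \<Longrightarrow> Sm U (pu g)" unfolding Sm_def using smn_Suc_pu by blast
lemma Sm_pv: "Sm U g \<Longrightarrow> Sm U (pv g)" unfolding Sm_def using smn_Suc_pv by blast
lemma Sm_diff: "Sm U g \<Longrightarrow> p \<in> U \<Longrightarrow> g differentiable at p" unfolding Sm_def using smn_diff by blast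
lemma Sm_add: "open U \<Longrightarrow> Sm U g \<Longrightarrow> Sm U h \<Longrightarrow> Sm U (\<lambda>q. g q + h q)"
  unfolding Sm_def using smn_add by blast
lemma Sm_lin: "open U \<Longrightarrow> bounded_linear L \<Longrightarrow> Sm U g \<Longrightarrow> Sm U (\<lambda>q. L (g q))"
  unfolding Sm_def using smn_lin by blast
lemma Sm_bilin: "open U \<Longrightarrow> bounded_bilinear bl \<Longrightarrow> Sm U x \<Longrightarrow> Sm U y \<Longrightarrow> Sm U (\<lambda>q. bl (x q) (y q))"
  unfolding Sm_def using smn_bilin by blast
lemma Sm_const: "Sm U (\<lambda>q. c)" unfolding Sm_def using smn_const by blast
lemma Sm_inv: "open U \<Longrightarrow> Sm U d \<Longrightarrow> (\<And>p. p \<in> U \<Longrightarrow> (d::real\<times>real\<Rightarrow>real) p \<noteq> 0) \<Longrightarrow> Sm U (\<lambda>q. inverse (d q))"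
  unfolding Sm_def using smn_inv by blast
lemma Sm_cong: "open U \<Longrightarrow> (\<And>q. q \<in> U \<Longrightarrow> g q = h q) \<Longrightarrow> Sm U g \<Longrightarrow> Sm U h"
  unfolding Sm_def using smn_cong by blast
lemma Sm_minus: "open U \<Longrightarrow> Sm U g \<Longrightarrow> Sm U (\<lambda>q. - g q)"
  using Sm_lin[OF _ bounded_linear_minus[OF bounded_linear_ident]] by blast
lemma Sm_diff': "open U \<Longrightarrow> Sm U g \<Longrightarrow> Sm U h \<Longrightarrow> Sm U (\<lambda>q. g q - h q)"
  using Sm_add[of U g "\<lambda>q. - h q"] Sm_minus[of U h] by simp
lemma Sm_scaleR: "open U \<Longrightarrow> Sm U x \<Longrightarrow> Sm U y \<Longrightarrow> Sm U (\<lambda>q. x q *\<^sub>R y q)"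
  using Sm_bilin[OF _ bounded_bilinear_scaleR] by blast
lemma Sm_mult: "open U \<Longrightarrow> Sm U x \<Longrightarrow> Sm U y \<Longrightarrow> Sm U (\<lambda>q. x q * (y q :: real))"
  using Sm_bilin[OF _ bounded_bilinear_mult] by blast

fun fl :: "nat \<Rightarrow> (real \<times> real \<Rightarrow> 'a::real_normed_vector) \<Rightarrow> bool" where
  "fl 0 g = (g (0,0) = 0)"
| "fl (Suc m) g = (g (0,0) = 0 \<and> fl m (pu g) \<and> fl m (pv g))"

lemma fl_0: "fl m g \<Longrightarrow> g (0,0) = 0"
  by (cases m) simp_all
lemma fl_SucI: "g (0,0) = 0 \<Longrightarrow> fl m (pu g) \<Longrightarrow> fl m (pv g) \<Longrightarrow> fl (Suc m) g"
  by (simp only: fl.simps(2))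
lemma fl_Suc_pu: "fl (Suc m) g \<Longrightarrow> fl m (pu g)"
  by (simp only: fl.simps(2))
lemma fl_Suc_pv: "fl (Suc m) g \<Longrightarrow> fl m (pv g)"
  by (simp only: fl.simps(2))
declare fl.simps(2)[simp del]

lemma fl_mono: "fl (Suc m) g \<Longrightarrow> fl m g"
proof (induction m arbitrary: g)
  case 0
  then show ?case using fl_0 by simp
next
  case (Suc m)
  show ?case by (rule fl_SucI[OF fl_0[OF Suc.prems] Suc.IH[OF fl_Suc_pu[OF Suc.prems]] Suc.IH[OF fl_Suc_pv[OF Suc.prems]]])
qed

lemma fl_mono': "fl m g \<Longrightarrow> k \<le> m \<Longrightarrow> fl k g"
proof (induction m)
  case 0
  then show ?case by simp
next
  case (Suc m)
  then show ?case using fl_mono by (cases "k = Suc m") auto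
qed

lemma jet_Suc:
  fixes g :: "real \<times> real \<Rightarrow> 'a::euclidean_space"
  assumes "open U" "(0,0) \<in> U" "smooth_on2 U g"
  shows "jet_vanishes (Suc m) g (0,0) \<longleftrightarrow> g (0,0) = 0 \<and> jet_vanishes m (pu g) (0,0) \<and> jet_vanishes m (pv g) (0,0)"
proof
  assume J: "jet_vanishes (Suc m) g (0,0)"
  have "g (0,0) = 0" using J unfolding jet_vanishes_def using pd00[of g] by (metis le0 add_0)
  moreover have "jet_vanishes m (pu g) (0,0)"
    unfolding jet_vanishes_def
  proof (intro allI impI)
    fix i j assume "i + j \<le> m"
    then show "pd i j (pu g) (0,0) = 0" using J pd_pu[OF assms(1,3,2)] unfolding jet_vanishes_def by simp
  qed
  moreover have "jet_vanishes m (pv g) (0,0)"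
    unfolding jet_vanishes_def
  proof (intro allI impI)
    fix i j assume "i + j \<le> m"
    then have "i + Suc j \<le> Suc m" by simp
    then show "pd i j (pv g) (0,0) = 0" using J unfolding jet_vanishes_def pd_pv by blast
  qed
  ultimately show "g (0,0) = 0 \<and> jet_vanishes m (pu g) (0,0) \<and> jet_vanishes m (pv g) (0,0)" by blast
next
  assume H: "g (0,0) = 0 \<and> jet_vanishes m (pu g) (0,0) \<and> jet_vanishes m (pv g) (0,0)"
  show "jet_vanishes (Suc m) g (0,0)"
    unfolding jet_vanishes_def
  proof (intro allI impI)
    fix i j assume ij: "i + j \<le> Suc m"
    show "pd i j g (0,0) = 0"
    proof (cases j)
      case (Suc j')
      then have "i + j' \<le> m" using ij by simp
      then show ?thesis using H \<open>j = Suc j'\<close> pd_pv[of i j' g] unfolding jet_vanishes_def by metis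
    next
      case 0
      show ?thesis
      proof (cases i)
        case 0
        then show ?thesis using H \<open>j = 0\<close> pd00[of g] by simp
      next
        case (Suc i')
        then show ?thesis using H ij \<open>j = 0\<close> pd_pu[OF assms(1,3,2), of i' 0] unfolding jet_vanishes_def by simp
      qed
    qed
  qed
qed

lemma fl_jet:
  fixes g :: "real \<times> real \<Rightarrow> 'a::euclidean_space"
  assumes "open U" "(0,0) \<in> U"
  shows "smooth_on2 U g \<Longrightarrow> fl m g \<longleftrightarrow> jet_vanishes m g (0,0)"
proof (induction m arbitrary: g)
  case 0
  then show ?case unfolding jet_vanishes_def using pd00[of g] by auto
next
  case (Suc m)
  have "fl (Suc m) g \<longleftrightarrow> g (0,0) = 0 \<and> fl m (pu g) \<and> fl m (pv g)" using fl.simps(2) by blast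
  also have "\<dots> \<longleftrightarrow> g (0,0) = 0 \<and> jet_vanishes m (pu g) (0,0) \<and> jet_vanishes m (pv g) (0,0)"
    using Suc.IH[OF so_pu[OF assms(1) Suc.prems]] Suc.IH[OF so_pv[OF Suc.prems]] by blast
  also have "\<dots> \<longleftrightarrow> jet_vanishes (Suc m) g (0,0)" using jet_Suc[OF assms Suc.prems] by blast
  finally show ?case .
qed


lemma fl_cong: "open U \<Longrightarrow> (0,0) \<in> U \<Longrightarrow> (\<And>q. q \<in> U \<Longrightarrow> g q = h q) \<Longrightarrow> fl m g \<Longrightarrow> fl m h"
proof (induction m arbitrary: g h)
  case 0
  then show ?case by simp
next
  case (Suc m)
  have "fl m (pu h)" by (rule Suc.IH[OF Suc.prems(1,2) pu_localU[OF Suc.prems(1,3)] fl_Suc_pu[OF Suc.prems(4)]])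
  moreover have "fl m (pv h)" by (rule Suc.IH[OF Suc.prems(1,2) pv_localU[OF Suc.prems(1,3)] fl_Suc_pv[OF Suc.prems(4)]])
  moreover have "h (0,0) = 0" using fl_0[OF Suc.prems(4)] Suc.prems(2,3) by metis
  ultimately show ?case by (intro fl_SucI)
qed

lemma fl_add: "open U \<Longrightarrow> (0,0) \<in> U \<Longrightarrow> Sm U g \<Longrightarrow> Sm U h \<Longrightarrow> fl m g \<Longrightarrow> fl m h \<Longrightarrow> fl m (\<lambda>q. g q + h q)"
proof (induction m arbitrary: g h)
  case 0
  then show ?case by simp
next
  case (Suc m)
  have "fl m (\<lambda>q. pu g q + pu h q)"
    by (rule Suc.IH[OF Suc.prems(1,2) Sm_pu[OF Suc.prems(3)] Sm_pu[OF Suc.prems(4)] fl_Suc_pu[OF Suc.prems(5)] fl_Suc_pu[OF Suc.prems(6)]])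
  then have 1: "fl m (pu (\<lambda>q. g q + h q))"
    by (rule fl_cong[OF Suc.prems(1,2), rotated]) (use Sm_diff[OF Suc.prems(3)] Sm_diff[OF Suc.prems(4)] in \<open>simp add: pu_add\<close>)
  have "fl m (\<lambda>q. pv g q + pv h q)"
    by (rule Suc.IH[OF Suc.prems(1,2) Sm_pv[OF Suc.prems(3)] Sm_pv[OF Suc.prems(4)] fl_Suc_pv[OF Suc.prems(5)] fl_Suc_pv[OF Suc.prems(6)]])
  then have 2: "fl m (pv (\<lambda>q. g q + h q))"
    by (rule fl_cong[OF Suc.prems(1,2), rotated]) (use Sm_diff[OF Suc.prems(3)] Sm_diff[OF Suc.prems(4)] in \<open>simp add: pv_add\<close>)
  show ?case by (rule fl_SucI[OF _ 1 2]) (simp add: fl_0[OF Suc.prems(5)] fl_0[OF Suc.prems(6)])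
qed

lemma fl_lin: "open U \<Longrightarrow> (0,0) \<in> U \<Longrightarrow> bounded_linear L \<Longrightarrow> Sm U g \<Longrightarrow> fl m g \<Longrightarrow> fl m (\<lambda>q. L (g q))"
proof (induction m arbitrary: g)
  case 0
  then show ?case by (simp add: linear_0 bounded_linear.linear)
next
  case (Suc m)
  have "fl m (\<lambda>q. L (pu g q))"
    by (rule Suc.IH[OF Suc.prems(1,2,3) Sm_pu[OF Suc.prems(4)] fl_Suc_pu[OF Suc.prems(5)]])
  then have 1: "fl m (pu (\<lambda>q. L (g q)))"
    by (rule fl_cong[OF Suc.prems(1,2), rotated]) (use Sm_diff[OF Suc.prems(4)] in \<open>simp add: pu_lin Suc.prems(3)\<close>)
  have "fl m (\<lambda>q. L (pv g q))"
    by (rule Suc.IH[OF Suc.prems(1,2,3) Sm_pv[OF Suc.prems(4)] fl_Suc_pv[OF Suc.prems(5)]])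
  then have 2: "fl m (pv (\<lambda>q. L (g q)))"
    by (rule fl_cong[OF Suc.prems(1,2), rotated]) (use Sm_diff[OF Suc.prems(4)] in \<open>simp add: pv_lin Suc.prems(3)\<close>)
  show ?case by (rule fl_SucI[OF _ 1 2]) (simp add: fl_0[OF Suc.prems(5)] linear_0 bounded_linear.linear Suc.prems(3))
qed

lemma fl_bilin: "open U \<Longrightarrow> (0,0) \<in> U \<Longrightarrow> bounded_bilinear bl \<Longrightarrow> Sm U x \<Longrightarrow> Sm U y \<Longrightarrow> fl m x \<Longrightarrow> fl m (\<lambda>q. bl (x q) (y q))"
proof (induction m arbitrary: x y)
  case 0
  then show ?case by (simp add: bounded_bilinear.zero_left)
next
  case (Suc m)
  have s1: "Sm U (\<lambda>q. bl (x q) (pu y q))" by (rule Sm_bilin[OF Suc.prems(1,3,4) Sm_pu[OF Suc.prems(5)]])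
  have s2: "Sm U (\<lambda>q. bl (pu x q) (y q))" by (rule Sm_bilin[OF Suc.prems(1,3) Sm_pu[OF Suc.prems(4)] Suc.prems(5)])
  have s3: "Sm U (\<lambda>q. bl (x q) (pv y q))" by (rule Sm_bilin[OF Suc.prems(1,3,4) Sm_pv[OF Suc.prems(5)]])
  have s4: "Sm U (\<lambda>q. bl (pv x q) (y q))" by (rule Sm_bilin[OF Suc.prems(1,3) Sm_pv[OF Suc.prems(4)] Suc.prems(5)])
  have "fl m (\<lambda>q. bl (x q) (pu y q) + bl (pu x q) (y q))"
    by (rule fl_add[OF Suc.prems(1,2) s1 s2
         Suc.IH[OF Suc.prems(1,2,3,4) Sm_pu[OF Suc.prems(5)] fl_mono[OF Suc.prems(6)]]
         Suc.IH[OF Suc.prems(1,2,3) Sm_pu[OF Suc.prems(4)] Suc.prems(5) fl_Suc_pu[OF Suc.prems(6)]]])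
  then have 1: "fl m (pu (\<lambda>q. bl (x q) (y q)))"
    by (rule fl_cong[OF Suc.prems(1,2), rotated]) (use Sm_diff[OF Suc.prems(4)] Sm_diff[OF Suc.prems(5)] in \<open>simp add: pu_bilin Suc.prems(3)\<close>)
  have "fl m (\<lambda>q. bl (x q) (pv y q) + bl (pv x q) (y q))"
    by (rule fl_add[OF Suc.prems(1,2) s3 s4
         Suc.IH[OF Suc.prems(1,2,3,4) Sm_pv[OF Suc.prems(5)] fl_mono[OF Suc.prems(6)]]
         Suc.IH[OF Suc.prems(1,2,3) Sm_pv[OF Suc.prems(4)] Suc.prems(5) fl_Suc_pv[OF Suc.prems(6)]]])
  then have 2: "fl m (pv (\<lambda>q. bl (x q) (y q)))"
    by (rule fl_cong[OF Suc.prems(1,2), rotated]) (use Sm_diff[OF Suc.prems(4)] Sm_diff[OF Suc.prems(5)] in \<open>simp add: pv_bilin Suc.prems(3)\<close>)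
  show ?case by (rule fl_SucI[OF _ 1 2]) (simp add: fl_0[OF Suc.prems(6)] bounded_bilinear.zero_left Suc.prems(3))
qed

lemma fl_bilin2: "open U \<Longrightarrow> (0,0) \<in> U \<Longrightarrow> bounded_bilinear bl \<Longrightarrow> Sm U x \<Longrightarrow> Sm U y \<Longrightarrow> fl m y \<Longrightarrow> fl m (\<lambda>q. bl (x q) (y q))"
  using fl_bilin[of U "\<lambda>a b. bl b a" y x m] bounded_bilinear.flip by blast

lemma fl_minus: "open U \<Longrightarrow> (0,0) \<in> U \<Longrightarrow> Sm U g \<Longrightarrow> fl m g \<Longrightarrow> fl m (\<lambda>q. - g q)"
  using fl_lin[OF _ _ bounded_linear_minus[OF bounded_linear_ident]] by blast

lemma fl_diff: "open U \<Longrightarrow> (0,0) \<in> U \<Longrightarrow> Sm U g \<Longrightarrow> Sm U h \<Longrightarrow> fl m g \<Longrightarrow> fl m h \<Longrightarrow> fl m (\<lambda>q. g q - h q)"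
  using fl_add[of U g "\<lambda>q. - h q" m] fl_minus[of U h m] Sm_minus[of U h] by simp

lemma fl_indep:
  fixes X Y :: "real \<times> real \<Rightarrow> real" and P Q :: "real \<times> real \<Rightarrow> 'a::real_normed_vector"
  assumes U: "open U" "(0,0) \<in> U" and S: "Sm U P" "Sm U Q"
    and ind: "\<And>a b. a *\<^sub>R P (0,0) + b *\<^sub>R Q (0,0) = 0 \<Longrightarrow> a = 0 \<and> b = 0"
  shows "Sm U X \<Longrightarrow> Sm U Y \<Longrightarrow> fl m (\<lambda>q. X q *\<^sub>R P q + Y q *\<^sub>R Q q) \<Longrightarrow> fl m X \<and> fl m Y"
proof (induction m arbitrary: X Y)
  case 0
  then show ?case using ind by simp
next
  case (Suc m)
  have SX: "Sm U X" and SY: "Sm U Y" by fact+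
  have z: "X (0,0) = 0 \<and> Y (0,0) = 0" using ind fl_0[OF Suc.prems(3)] by simp
  have m: "fl m X \<and> fl m Y" by (rule Suc.IH[OF SX SY fl_mono[OF Suc.prems(3)]])
  have SW: "Sm U (\<lambda>q. X q *\<^sub>R P q + Y q *\<^sub>R Q q)"
    by (rule Sm_add[OF U(1) Sm_scaleR[OF U(1) SX S(1)] Sm_scaleR[OF U(1) SY S(2)]])
  have R1: "fl m (\<lambda>q. X q *\<^sub>R pu P q + Y q *\<^sub>R pu Q q)"
    by (rule fl_add[OF U Sm_scaleR[OF U(1) SX Sm_pu[OF S(1)]] Sm_scaleR[OF U(1) SY Sm_pu[OF S(2)]]
        fl_bilin[OF U bounded_bilinear_scaleR SX Sm_pu[OF S(1)] m[THEN conjunct1]]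
        fl_bilin[OF U bounded_bilinear_scaleR SY Sm_pu[OF S(2)] m[THEN conjunct2]]])
  have SR1: "Sm U (\<lambda>q. X q *\<^sub>R pu P q + Y q *\<^sub>R pu Q q)"
    by (rule Sm_add[OF U(1) Sm_scaleR[OF U(1) SX Sm_pu[OF S(1)]] Sm_scaleR[OF U(1) SY Sm_pu[OF S(2)]]])
  have "fl m (\<lambda>q. pu (\<lambda>q. X q *\<^sub>R P q + Y q *\<^sub>R Q q) q - (X q *\<^sub>R pu P q + Y q *\<^sub>R pu Q q))"
    by (rule fl_diff[OF U Sm_pu[OF SW] SR1 fl_Suc_pu[OF Suc.prems(3)] R1])
  then have "fl m (\<lambda>q. pu X q *\<^sub>R P q + pu Y q *\<^sub>R Q q)"
  proof (rule fl_cong[OF U, rotated])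
    fix q assume q: "q \<in> U"
    have dd: "X differentiable at q" "Y differentiable at q" "P differentiable at q" "Q differentiable at q"
      using q SX SY S Sm_diff by blast+
    have "pu (\<lambda>q. X q *\<^sub>R P q + Y q *\<^sub>R Q q) q = pu (\<lambda>q. X q *\<^sub>R P q) q + pu (\<lambda>q. Y q *\<^sub>R Q q) q"
      by (rule pu_add) (intro diff_bilin[OF bounded_bilinear_scaleR] dd)+
    also have "\<dots> = (X q *\<^sub>R pu P q + pu X q *\<^sub>R P q) + (Y q *\<^sub>R pu Q q + pu Y q *\<^sub>R Q q)"
      by (simp only: pu_bilin[OF bounded_bilinear_scaleR dd(1) dd(3)] pu_bilin[OF bounded_bilinear_scaleR dd(2) dd(4)])
    finally show "pu (\<lambda>q. X q *\<^sub>R P q + Y q *\<^sub>R Q q) q - (X q *\<^sub>R pu P q + Y q *\<^sub>R pu Q q) = pu X q *\<^sub>R P q + pu Y q *\<^sub>R Q q"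
      by (simp add: algebra_simps)
  qed
  then have u: "fl m (pu X) \<and> fl m (pu Y)" by (rule Suc.IH[OF Sm_pu[OF SX] Sm_pu[OF SY]])
  have R2: "fl m (\<lambda>q. X q *\<^sub>R pv P q + Y q *\<^sub>R pv Q q)"
    by (rule fl_add[OF U Sm_scaleR[OF U(1) SX Sm_pv[OF S(1)]] Sm_scaleR[OF U(1) SY Sm_pv[OF S(2)]]
        fl_bilin[OF U bounded_bilinear_scaleR SX Sm_pv[OF S(1)] m[THEN conjunct1]]
        fl_bilin[OF U bounded_bilinear_scaleR SY Sm_pv[OF S(2)] m[THEN conjunct2]]])
  have SR2: "Sm U (\<lambda>q. X q *\<^sub>R pv P q + Y q *\<^sub>R pv Q q)"
    by (rule Sm_add[OF U(1) Sm_scaleR[OF U(1) SX Sm_pv[OF S(1)]] Sm_scaleR[OF U(1) SY Sm_pv[OF S(2)]]])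
  have "fl m (\<lambda>q. pv (\<lambda>q. X q *\<^sub>R P q + Y q *\<^sub>R Q q) q - (X q *\<^sub>R pv P q + Y q *\<^sub>R pv Q q))"
    by (rule fl_diff[OF U Sm_pv[OF SW] SR2 fl_Suc_pv[OF Suc.prems(3)] R2])
  then have "fl m (\<lambda>q. pv X q *\<^sub>R P q + pv Y q *\<^sub>R Q q)"
  proof (rule fl_cong[OF U, rotated])
    fix q assume q: "q \<in> U"
    have dd: "X differentiable at q" "Y differentiable at q" "P differentiable at q" "Q differentiable at q"
      using q SX SY S Sm_diff by blast+
    have "pv (\<lambda>q. X q *\<^sub>R P q + Y q *\<^sub>R Q q) q = pv (\<lambda>q. X q *\<^sub>R P q) q + pv (\<lambda>q. Y q *\<^sub>R Q q) q"
      by (rule pv_add) (intro diff_bilin[OF bounded_bilinear_scaleR] dd)+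
    also have "\<dots> = (X q *\<^sub>R pv P q + pv X q *\<^sub>R P q) + (Y q *\<^sub>R pv Q q + pv Y q *\<^sub>R Q q)"
      by (simp only: pv_bilin[OF bounded_bilinear_scaleR dd(1) dd(3)] pv_bilin[OF bounded_bilinear_scaleR dd(2) dd(4)])
    finally show "pv (\<lambda>q. X q *\<^sub>R P q + Y q *\<^sub>R Q q) q - (X q *\<^sub>R pv P q + Y q *\<^sub>R pv Q q) = pv X q *\<^sub>R P q + pv Y q *\<^sub>R Q q"
      by (simp add: algebra_simps)
  qed
  then have v: "fl m (pv X) \<and> fl m (pv Y)" by (rule Suc.IH[OF Sm_pv[OF SX] Sm_pv[OF SY]])
  show ?case using z u v fl_SucI by blast
qed


lemma pu_sub: "g differentiable at p \<Longrightarrow> h differentiable at p \<Longrightarrow> pu (\<lambda>q. g q - h q) p = pu g p - pu h p"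
  by (cases p) (simp, rule pu_via, rule has_vector_derivative_diff; rule pu_hvd, simp)
lemma pv_sub: "g differentiable at p \<Longrightarrow> h differentiable at p \<Longrightarrow> pv (\<lambda>q. g q - h q) p = pv g p - pv h p"
  by (cases p) (simp, rule pv_via, rule has_vector_derivative_diff; rule pv_hvd, simp)

lemma Sm_pair: "open U \<Longrightarrow> Sm U x \<Longrightarrow> Sm U y \<Longrightarrow> Sm U (\<lambda>q. (x q :: real, y q :: real))"
proof -
  assume U: "open U" and x: "Sm U x" and y: "Sm U y"
  have l1: "bounded_linear (\<lambda>r::real. (r, 0::real))" by (intro bounded_linear_Pair bounded_linear_ident bounded_linear_zero)
  have l2: "bounded_linear (\<lambda>r::real. (0::real, r))" by (intro bounded_linear_Pair bounded_linear_ident bounded_linear_zero)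
  have "Sm U (\<lambda>q. (x q, 0::real) + (0::real, y q))" by (rule Sm_add[OF U Sm_lin[OF U l1 x] Sm_lin[OF U l2 y]])
  then show ?thesis by simp
qed

lemma fl_pair: "open U \<Longrightarrow> (0,0) \<in> U \<Longrightarrow> Sm U x \<Longrightarrow> Sm U y \<Longrightarrow> fl m (\<lambda>q. (x q :: real, y q :: real)) \<longleftrightarrow> fl m x \<and> fl m y"
proof -
  assume U: "open U" "(0,0) \<in> U" and x: "Sm U x" and y: "Sm U y"
  have l1: "bounded_linear (\<lambda>r::real. (r, 0::real))" by (intro bounded_linear_Pair bounded_linear_ident bounded_linear_zero)
  have l2: "bounded_linear (\<lambda>r::real. (0::real, r))" by (intro bounded_linear_Pair bounded_linear_ident bounded_linear_zero)
  have S: "Sm U (\<lambda>q. (x q, y q))" by (rule Sm_pair[OF U(1) x y])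
  show ?thesis
  proof
    assume "fl m (\<lambda>q. (x q, y q))"
    from fl_lin[OF U bounded_linear_fst S this] fl_lin[OF U bounded_linear_snd S this]
    show "fl m x \<and> fl m y" by simp
  next
    assume "fl m x \<and> fl m y"
    then have "fl m (\<lambda>q. (x q, 0::real) + (0::real, y q))"
      by (intro fl_add[OF U Sm_lin[OF U(1) l1 x] Sm_lin[OF U(1) l2 y]] fl_lin[OF U l1 x] fl_lin[OF U l2 y]) auto
    then show "fl m (\<lambda>q. (x q, y q))" by simp
  qed
qed

lemma fl_scale_iff:
  assumes U: "open U" "(0,0) \<in> U" and g: "Sm U g" and c: "(c::real) \<noteq> 0"
  shows "fl m (\<lambda>q. c * g q) \<longleftrightarrow> fl m g"
proof
  have S: "Sm U (\<lambda>q. c * g q)" by (rule Sm_lin[OF U(1) bounded_linear_mult_right g])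
  assume "fl m (\<lambda>q. c * g q)"
  from fl_lin[OF U bounded_linear_mult_right[of "inverse c"] S this]
  have "fl m (\<lambda>q. inverse c * (c * g q))" .
  moreover have "(\<lambda>q. inverse c * (c * g q)) = g" using c by (simp add: mult.assoc[symmetric])
  ultimately show "fl m g" by simp
next
  assume "fl m g"
  from fl_lin[OF U bounded_linear_mult_right[of c] g this] show "fl m (\<lambda>q. c * g q)" .
qed

lemma vec_rearr:
  fixes X Y Z u w :: "'a::real_vector"
  assumes "a *\<^sub>R X + a' *\<^sub>R u + (b *\<^sub>R Y + b' *\<^sub>R w) = b *\<^sub>R Z + b'' *\<^sub>R u + (c *\<^sub>R X + c' *\<^sub>R w)"
  shows "b *\<^sub>R (Z - Y) + (c - a) *\<^sub>R X = (a' - b'') *\<^sub>R u + (b' - c') *\<^sub>R w"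
proof -
  have "(b *\<^sub>R (Z - Y) + (c - a) *\<^sub>R X) - ((a' - b'') *\<^sub>R u + (b' - c') *\<^sub>R w)
      = (b *\<^sub>R Z + b'' *\<^sub>R u + (c *\<^sub>R X + c' *\<^sub>R w)) - (a *\<^sub>R X + a' *\<^sub>R u + (b *\<^sub>R Y + b' *\<^sub>R w))"
    by (simp add: algebra_simps)
  also have "\<dots> = 0" using assms by simp
  finally show ?thesis by simp
qed

theorem lemma4p3:
  fixes U :: "(real \<times> real) set"
    and f xi :: "real \<times> real \<Rightarrow> real^3"
    and rho b11 b12 b22 :: "real \<times> real \<Rightarrow> real"
    and lambda0 :: real and k :: nat
  assumes U_open: "open U" and U0: "(0,0) \<in> U"
    and f_smooth: "smooth_on2 U f" and xi_smooth: "smooth_on2 U xi"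
    and transversal: "\<forall>p\<in>U. cross3 (pu f p) (pv f p) \<bullet> xi p \<noteq> 0"
    and rho_pos: "\<forall>p\<in>U. rho p > 0"
    and h11: "\<forall>p\<in>U. pu (pu f) p - rho p *\<^sub>R xi p \<in> span {pu f p, pv f p}"
    and h22: "\<forall>p\<in>U. pv (pv f) p - rho p *\<^sub>R xi p \<in> span {pu f p, pv f p}"
    and h12: "\<forall>p\<in>U. pu (pv f) p \<in> span {pu f p, pv f p}"
    and weing_u: "\<forall>p\<in>U. pu xi p = - (b11 p *\<^sub>R pu f p) - b12 p *\<^sub>R pv f p"
    and weing_v: "\<forall>p\<in>U. pv xi p = - (b12 p *\<^sub>R pu f p) - b22 p *\<^sub>R pv f p"
    and umb: "b11 (0,0) = lambda0" "b22 (0,0) = lambda0" "b12 (0,0) = 0"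
    and lambda0_nz: "lambda0 \<noteq> 0"
    and k_ge: "k \<ge> 1"
  shows "jet_vanishes (k - 1) (\<lambda>p. (b11 p - b22 p, 2 * b12 p)) (0,0) \<longleftrightarrow>
         jet_vanishes k (\<lambda>p. (f p + (1 / lambda0) *\<^sub>R xi p)
                               - (f (0,0) + (1 / lambda0) *\<^sub>R xi (0,0))) (0,0)"
proof -
  note U = U_open U0
  have Sf: "Sm U f" by (rule so_Sm[OF U_open f_smooth])
  have Sx: "Sm U xi" by (rule so_Sm[OF U_open xi_smooth])
  have Sfu: "Sm U (pu f)" and Sfv: "Sm U (pv f)" and Sxu: "Sm U (pu xi)" and Sxv: "Sm U (pv xi)"
    using Sf Sx Sm_pu Sm_pv by blast+
  have cb: "bounded_bilinear cross3" using bilinear_cross bilinear_conv_bounded_bilinear by blast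
  define det where "det = (\<lambda>q. cross3 (pu f q) (pv f q) \<bullet> xi q)"
  have Sdet: "Sm U det" unfolding det_def
    by (rule Sm_bilin[OF U_open bounded_bilinear_inner Sm_bilin[OF U_open cb Sfu Sfv] Sx])
  have det_nz: "\<And>q. q \<in> U \<Longrightarrow> det q \<noteq> 0" using transversal unfolding det_def by blast
  have Sidet: "Sm U (\<lambda>q. inverse (det q))" by (rule Sm_inv[OF U_open Sdet det_nz])
  note bsimps = bounded_bilinear.diff_left[OF cb] bounded_bilinear.minus_left[OF cb] bounded_bilinear.scaleR_left[OF cb]
    bounded_bilinear.diff_right[OF cb] bounded_bilinear.minus_right[OF cb] bounded_bilinear.scaleR_right[OF cb]
    bounded_bilinear.add_left[OF cb] bounded_bilinear.add_right[OF cb]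
  have Sb11: "Sm U b11"
  proof (rule Sm_cong[OF U_open _ Sm_mult[OF U_open Sm_minus[OF U_open Sm_bilin[OF U_open bounded_bilinear_inner Sm_bilin[OF U_open cb Sxu Sfv] Sx]] Sidet]])
    fix q assume q: "q \<in> U"
    have "cross3 (pu xi q) (pv f q) \<bullet> xi q = - b11 q * det q"
      using weing_u q unfolding det_def by (simp add: bsimps)
    then show "- (cross3 (pu xi q) (pv f q) \<bullet> xi q) * inverse (det q) = b11 q"
      using det_nz[OF q] by (simp add: field_simps)
  qed
  have Sb12: "Sm U b12"
  proof (rule Sm_cong[OF U_open _ Sm_mult[OF U_open Sm_minus[OF U_open Sm_bilin[OF U_open bounded_bilinear_inner Sm_bilin[OF U_open cb Sfu Sxu] Sx]] Sidet]])
    fix q assume q: "q \<in> U"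
    have "cross3 (pu f q) (pu xi q) \<bullet> xi q = - b12 q * det q"
      using weing_u q unfolding det_def by (simp add: bsimps)
    then show "- (cross3 (pu f q) (pu xi q) \<bullet> xi q) * inverse (det q) = b12 q"
      using det_nz[OF q] by (simp add: field_simps)
  qed
  have Sb22: "Sm U b22"
  proof (rule Sm_cong[OF U_open _ Sm_mult[OF U_open Sm_minus[OF U_open Sm_bilin[OF U_open bounded_bilinear_inner Sm_bilin[OF U_open cb Sfu Sxv] Sx]] Sidet]])
    fix q assume q: "q \<in> U"
    have "cross3 (pu f q) (pv xi q) \<bullet> xi q = - b22 q * det q"
      using weing_v q unfolding det_def by (simp add: bsimps)
    then show "- (cross3 (pu f q) (pv xi q) \<bullet> xi q) * inverse (det q) = b22 q"
      using det_nz[OF q] by (simp add: field_simps)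
  qed
  define c where "c = 1 / lambda0"
  have c0: "c \<noteq> 0" unfolding c_def using lambda0_nz by simp
  have clam: "c * lambda0 = 1" unfolding c_def using lambda0_nz by simp
  define A where "A = (\<lambda>q. 1 - c * b11 q)"
  define B where "B = (\<lambda>q. - (c * b12 q))"
  define C where "C = (\<lambda>q. 1 - c * b22 q)"
  have SA: "Sm U A" unfolding A_def
    by (rule Sm_diff'[OF U_open Sm_const Sm_mult[OF U_open Sm_const Sb11]])
  have SB: "Sm U B" unfolding B_def
    by (rule Sm_minus[OF U_open Sm_mult[OF U_open Sm_const Sb12]])
  have SC: "Sm U C" unfolding C_def
    by (rule Sm_diff'[OF U_open Sm_const Sm_mult[OF U_open Sm_const Sb22]])
  have A0: "A (0,0) = 0" and B0: "B (0,0) = 0" and C0: "C (0,0) = 0"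
    unfolding A_def B_def C_def using umb clam by (simp_all add: mult.commute)
  define G where "G = (\<lambda>p. (f p + (1 / lambda0) *\<^sub>R xi p) - (f (0,0) + (1 / lambda0) *\<^sub>R xi (0,0)))"
  have Gc: "G = (\<lambda>p. (f p + c *\<^sub>R xi p) - (f (0,0) + c *\<^sub>R xi (0,0)))" unfolding G_def c_def ..
  have lc: "bounded_linear (\<lambda>x::real^3. c *\<^sub>R x)" by (rule bounded_linear_scaleR_right)
  have SF: "Sm U (\<lambda>p. f p + c *\<^sub>R xi p)" by (rule Sm_add[OF U_open Sf Sm_lin[OF U_open lc Sx]])
  have SG: "Sm U G" unfolding Gc by (rule Sm_diff'[OF U_open SF Sm_const])
  have dF: "\<And>q. q \<in> U \<Longrightarrow> (\<lambda>p. f p + c *\<^sub>R xi p) differentiable at q" using SF Sm_diff by blast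
  have df: "\<And>q. q \<in> U \<Longrightarrow> f differentiable at q" using Sf Sm_diff by blast
  have dx: "\<And>q. q \<in> U \<Longrightarrow> xi differentiable at q" using Sx Sm_diff by blast
  have puG: "\<And>q. q \<in> U \<Longrightarrow> pu G q = A q *\<^sub>R pu f q + B q *\<^sub>R pv f q"
  proof -
    fix q assume q: "q \<in> U"
    have "pu G q = pu (\<lambda>p. f p + c *\<^sub>R xi p) q - pu (\<lambda>p. f (0,0) + c *\<^sub>R xi (0,0)) q"
      unfolding Gc by (rule pu_sub[OF dF[OF q]]) simp
    also have "\<dots> = pu f q + c *\<^sub>R pu xi q"
      by (simp add: pu_const pu_add[OF df[OF q] diff_lin[OF lc dx[OF q]]] pu_lin[OF lc dx[OF q]])
    also have "\<dots> = A q *\<^sub>R pu f q + B q *\<^sub>R pv f q"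
      unfolding A_def B_def bspec[OF weing_u q] by (simp add: algebra_simps)
    finally show "pu G q = A q *\<^sub>R pu f q + B q *\<^sub>R pv f q" .
  qed
  have pvG: "\<And>q. q \<in> U \<Longrightarrow> pv G q = B q *\<^sub>R pu f q + C q *\<^sub>R pv f q"
  proof -
    fix q assume q: "q \<in> U"
    have "pv G q = pv (\<lambda>p. f p + c *\<^sub>R xi p) q - pv (\<lambda>p. f (0,0) + c *\<^sub>R xi (0,0)) q"
      unfolding Gc by (rule pv_sub[OF dF[OF q]]) simp
    also have "\<dots> = pv f q + c *\<^sub>R pv xi q"
      by (simp add: pv_const pv_add[OF df[OF q] diff_lin[OF lc dx[OF q]]] pv_lin[OF lc dx[OF q]])
    also have "\<dots> = B q *\<^sub>R pu f q + C q *\<^sub>R pv f q"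
      unfolding B_def C_def bspec[OF weing_v q] by (simp add: algebra_simps)
    finally show "pv G q = B q *\<^sub>R pu f q + C q *\<^sub>R pv f q" .
  qed
  have ind: "\<And>a b. a *\<^sub>R pu f (0,0) + b *\<^sub>R pv f (0,0) = 0 \<Longrightarrow> a = 0 \<and> b = 0"
  proof -
    fix a b assume ab: "a *\<^sub>R pu f (0,0) + b *\<^sub>R pv f (0,0) = 0"
    have "cross3 (a *\<^sub>R pu f (0,0) + b *\<^sub>R pv f (0,0)) (pv f (0,0)) \<bullet> xi (0,0) = a * det (0,0)"
      unfolding det_def by (simp add: bsimps)
    then have a: "a = 0" using ab det_nz[OF U0] by simp
    have "cross3 (pu f (0,0)) (a *\<^sub>R pu f (0,0) + b *\<^sub>R pv f (0,0)) \<bullet> xi (0,0) = b * det (0,0)"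
      unfolding det_def by (simp add: bsimps)
    then have "b = 0" using ab det_nz[OF U0] by simp
    with a show "a = 0 \<and> b = 0" ..
  qed
  have Sfuu: "Sm U (pu (pu f))" and Sfvv: "Sm U (pv (pv f))" and Sfvu: "Sm U (pu (pv f))"
    using Sfu Sfv Sm_pu Sm_pv by blast+
  define E where "E = (\<lambda>q. C q - A q)"
  have SE: "Sm U E" unfolding E_def by (rule Sm_diff'[OF U_open SC SA])
  \<comment> \<open>the Codazzi-type argument\<close>
  have codazzi: "fl m A \<and> fl m C" if fE: "fl m E" and fB: "fl m B" for m
  proof (cases m)
    case 0
    then show ?thesis using A0 C0 by simp
  next
    case (Suc m')
    have key: "B q *\<^sub>R (pu (pu f) q - pv (pv f) q) + E q *\<^sub>R pu (pv f) q
        = (pv A q - pu B q) *\<^sub>R pu f q + (pv B q - pu C q) *\<^sub>R pv f q" if q: "q \<in> U" for q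
    proof -
      have dA: "A differentiable at q" and dB: "B differentiable at q" and dC: "C differentiable at q"
        and dfu: "pu f differentiable at q" and dfv: "pv f differentiable at q"
        using q SA SB SC Sfu Sfv Sm_diff by blast+
      have "pv (pu G) q = pv (\<lambda>q. A q *\<^sub>R pu f q + B q *\<^sub>R pv f q) q" by (rule pv_localU[OF U_open puG q])
      also have "\<dots> = pv (\<lambda>q. A q *\<^sub>R pu f q) q + pv (\<lambda>q. B q *\<^sub>R pv f q) q"
        by (rule pv_add) (intro diff_bilin[OF bounded_bilinear_scaleR] dA dB dfu dfv)+
      also have "\<dots> = A q *\<^sub>R pv (pu f) q + pv A q *\<^sub>R pu f q + (B q *\<^sub>R pv (pv f) q + pv B q *\<^sub>R pv f q)"
        by (simp only: pv_bilin[OF bounded_bilinear_scaleR dA dfu] pv_bilin[OF bounded_bilinear_scaleR dB dfv])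
      finally have e1: "pv (pu G) q = A q *\<^sub>R pv (pu f) q + pv A q *\<^sub>R pu f q + (B q *\<^sub>R pv (pv f) q + pv B q *\<^sub>R pv f q)" .
      have "pu (pv G) q = pu (\<lambda>q. B q *\<^sub>R pu f q + C q *\<^sub>R pv f q) q" by (rule pu_localU[OF U_open pvG q])
      also have "\<dots> = pu (\<lambda>q. B q *\<^sub>R pu f q) q + pu (\<lambda>q. C q *\<^sub>R pv f q) q"
        by (rule pu_add) (intro diff_bilin[OF bounded_bilinear_scaleR] dC dB dfu dfv)+
      also have "\<dots> = B q *\<^sub>R pu (pu f) q + pu B q *\<^sub>R pu f q + (C q *\<^sub>R pu (pv f) q + pu C q *\<^sub>R pv f q)"
        by (simp only: pu_bilin[OF bounded_bilinear_scaleR dB dfu] pu_bilin[OF bounded_bilinear_scaleR dC dfv])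
      finally have e2: "pu (pv G) q = B q *\<^sub>R pu (pu f) q + pu B q *\<^sub>R pu f q + (C q *\<^sub>R pu (pv f) q + pu C q *\<^sub>R pv f q)" .
      have e3: "pv (pu G) q = pu (pv G) q" by (rule so_schwarz[OF U_open Sm_so[OF SG] q])
      have e4: "pv (pu f) q = pu (pv f) q" by (rule so_schwarz[OF U_open f_smooth q])
      have "A q *\<^sub>R pu (pv f) q + pv A q *\<^sub>R pu f q + (B q *\<^sub>R pv (pv f) q + pv B q *\<^sub>R pv f q)
          = B q *\<^sub>R pu (pu f) q + pu B q *\<^sub>R pu f q + (C q *\<^sub>R pu (pv f) q + pu C q *\<^sub>R pv f q)"
        using e1 e2 e3 e4 by simp
      from vec_rearr[OF this] show ?thesis unfolding E_def .
    qed
    have SR: "Sm U (\<lambda>q. B q *\<^sub>R (pu (pu f) q - pv (pv f) q) + E q *\<^sub>R pu (pv f) q)"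
      by (rule Sm_add[OF U_open Sm_scaleR[OF U_open SB Sm_diff'[OF U_open Sfuu Sfvv]] Sm_scaleR[OF U_open SE Sfvu]])
    have "fl m (\<lambda>q. B q *\<^sub>R (pu (pu f) q - pv (pv f) q) + E q *\<^sub>R pu (pv f) q)"
      by (rule fl_add[OF U Sm_scaleR[OF U_open SB Sm_diff'[OF U_open Sfuu Sfvv]] Sm_scaleR[OF U_open SE Sfvu]
            fl_bilin[OF U bounded_bilinear_scaleR SB Sm_diff'[OF U_open Sfuu Sfvv] fB]
            fl_bilin[OF U bounded_bilinear_scaleR SE Sfvu fE]])
    then have "fl m (\<lambda>q. (pv A q - pu B q) *\<^sub>R pu f q + (pv B q - pu C q) *\<^sub>R pv f q)"
      by (rule fl_cong[OF U, rotated]) (rule key)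
    from fl_indep[OF U Sfu Sfv ind Sm_diff'[OF U_open Sm_pv[OF SA] Sm_pu[OF SB]] Sm_diff'[OF U_open Sm_pv[OF SB] Sm_pu[OF SC]] this]
    have i1: "fl m' (\<lambda>q. pv A q - pu B q)" and i2: "fl m' (\<lambda>q. pv B q - pu C q)"
      using Suc fl_mono by blast+
    have Bu: "fl m' (pu B)" and Bv: "fl m' (pv B)" using fB Suc fl_Suc_pu fl_Suc_pv by blast+
    have Eu: "fl m' (pu E)" and Ev: "fl m' (pv E)" using fE Suc fl_Suc_pu fl_Suc_pv by blast+
    have "fl m' (\<lambda>q. (pv A q - pu B q) + pu B q)"
      by (rule fl_add[OF U Sm_diff'[OF U_open Sm_pv[OF SA] Sm_pu[OF SB]] Sm_pu[OF SB] i1 Bu])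
    then have Av: "fl m' (pv A)" by simp
    have "fl m' (\<lambda>q. pv B q - (pv B q - pu C q))"
      by (rule fl_diff[OF U Sm_pv[OF SB] Sm_diff'[OF U_open Sm_pv[OF SB] Sm_pu[OF SC]] Bv i2])
    then have Cu: "fl m' (pu C)" by simp
    have "fl m' (\<lambda>q. pu C q - pu E q)"
      by (rule fl_diff[OF U Sm_pu[OF SC] Sm_pu[OF SE] Cu Eu])
    then have Au: "fl m' (pu A)"
    proof (rule fl_cong[OF U, rotated])
      fix q assume q: "q \<in> U"
      have "pu E q = pu C q - pu A q" unfolding E_def
        by (rule pu_sub) (use q SA SC Sm_diff in blast)+
      then show "pu C q - pu E q = pu A q" by simp
    qed
    have "fl m' (\<lambda>q. pv A q + pv E q)"
      by (rule fl_add[OF U Sm_pv[OF SA] Sm_pv[OF SE] Av Ev])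
    then have Cv: "fl m' (pv C)"
    proof (rule fl_cong[OF U, rotated])
      fix q assume q: "q \<in> U"
      have "pv E q = pv C q - pv A q" unfolding E_def
        by (rule pv_sub) (use q SA SC Sm_diff in blast)+
      then show "pv A q + pv E q = pv C q" by simp
    qed
    show ?thesis using fl_SucI[OF A0 Au Av] fl_SucI[OF C0 Cu Cv] Suc by simp
  qed
  obtain m where km: "k = Suc m" using k_ge by (cases k) auto
  define P where "P = (\<lambda>p. (b11 p - b22 p, 2 * b12 p))"
  have S1: "Sm U (\<lambda>q. b11 q - b22 q)" by (rule Sm_diff'[OF U_open Sb11 Sb22])
  have S2: "Sm U (\<lambda>q. 2 * b12 q)" by (rule Sm_mult[OF U_open Sm_const Sb12])
  have SP: "Sm U P" unfolding P_def by (rule Sm_pair[OF U_open S1 S2])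
  have jP: "jet_vanishes m P (0,0) \<longleftrightarrow> fl m P" using fl_jet[OF U Sm_so[OF SP]] by simp
  have jG: "jet_vanishes (Suc m) G (0,0) \<longleftrightarrow> fl (Suc m) G" using fl_jet[OF U Sm_so[OF SG]] by simp
  have eCA: "E = (\<lambda>q. c * (b11 q - b22 q))" unfolding E_def A_def C_def by (auto simp: algebra_simps)
  have eB: "B = (\<lambda>q. (- c / 2) * (2 * b12 q))" unfolding B_def by auto
  have fP: "fl m P \<longleftrightarrow> fl m E \<and> fl m B"
  proof -
    have "fl m P \<longleftrightarrow> fl m (\<lambda>q. b11 q - b22 q) \<and> fl m (\<lambda>q. 2 * b12 q)"
      unfolding P_def by (rule fl_pair[OF U S1 S2])
    also have "fl m (\<lambda>q. b11 q - b22 q) \<longleftrightarrow> fl m E" unfolding eCA by (rule fl_scale_iff[OF U S1 c0, symmetric])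
    also have "fl m (\<lambda>q. 2 * b12 q) \<longleftrightarrow> fl m B" unfolding eB by (rule fl_scale_iff[OF U S2, symmetric]) (use c0 in simp)
    finally show ?thesis .
  qed
  define W1 where "W1 = (\<lambda>q. A q *\<^sub>R pu f q + B q *\<^sub>R pv f q)"
  define W2 where "W2 = (\<lambda>q. B q *\<^sub>R pu f q + C q *\<^sub>R pv f q)"
  have G0: "G (0,0) = 0" unfolding G_def by simp
  have fG: "fl (Suc m) G \<longleftrightarrow> fl m W1 \<and> fl m W2"
  proof
    assume "fl (Suc m) G"
    then have a: "fl m (pu G)" and b: "fl m (pv G)" using fl_Suc_pu fl_Suc_pv by blast+
    have "fl m W1" by (rule fl_cong[OF U _ a]) (simp add: W1_def puG)
    moreover have "fl m W2" by (rule fl_cong[OF U _ b]) (simp add: W2_def pvG)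
    ultimately show "fl m W1 \<and> fl m W2" ..
  next
    assume h: "fl m W1 \<and> fl m W2"
    have "fl m (pu G)" by (rule fl_cong[OF U _ h[THEN conjunct1]]) (simp add: W1_def puG)
    moreover have "fl m (pv G)" by (rule fl_cong[OF U _ h[THEN conjunct2]]) (simp add: W2_def pvG)
    ultimately show "fl (Suc m) G" using fl_SucI[of G m, OF G0] by blast
  qed
  have main: "fl m W1 \<and> fl m W2 \<longleftrightarrow> fl m E \<and> fl m B"
  proof
    assume "fl m W1 \<and> fl m W2"
    then have "fl m A \<and> fl m B" "fl m B \<and> fl m C" unfolding W1_def W2_def
      using fl_indep[OF U Sfu Sfv ind SA SB] fl_indep[OF U Sfu Sfv ind SB SC] by blast+
    then show "fl m E \<and> fl m B" unfolding E_def using fl_diff[OF U SC SA] by blast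
  next
    assume h: "fl m E \<and> fl m B"
    then have AC: "fl m A" "fl m C" using codazzi by blast+
    have "fl m W1" unfolding W1_def
      by (rule fl_add[OF U Sm_scaleR[OF U_open SA Sfu] Sm_scaleR[OF U_open SB Sfv]
            fl_bilin[OF U bounded_bilinear_scaleR SA Sfu AC(1)] fl_bilin[OF U bounded_bilinear_scaleR SB Sfv h[THEN conjunct2]]])
    moreover have "fl m W2" unfolding W2_def
      by (rule fl_add[OF U Sm_scaleR[OF U_open SB Sfu] Sm_scaleR[OF U_open SC Sfv]
            fl_bilin[OF U bounded_bilinear_scaleR SB Sfu h[THEN conjunct2]] fl_bilin[OF U bounded_bilinear_scaleR SC Sfv AC(2)]])
    ultimately show "fl m W1 \<and> fl m W2" ..
  qed
  have "jet_vanishes m P (0,0) \<longleftrightarrow> jet_vanishes (Suc m) G (0,0)"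
    using jP jG fP fG main by blast
  then show ?thesis unfolding P_def G_def km by simp
qed

end
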